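(* In the slotted $N$-queue system described in the context, the Longest Expected Queue (LEQ) policy stabilizes every arrival rate vector in $$\Lambda_{LEQ}=\Big\{\boldsymbol\lambda\in\mathbb{R}^N_+ : \sum_{i=1}^N\lambda_i<1 \text{ and } \min_{1\le i\le N}\lambda_i>0\Big\},$$ i.e., for every $\boldsymbol\lambda\in\Lambda_{LEQ}$ the system operated under LEQ is stable.
   Context: There are $N$ queues $I=\{1,\dots,N\}$ sharing a single server in slotted time $t=0,1,\dots$. Arrivals $A_j(t)\in\{0,1\}$ to queue $j$ at slot boundary $t$ are i.i.d. Bernoulli($\lambda_j$), independent across queues. In each slot at most one queue is scheduled, and a scheduled nonempty queue transmits exactly one packet; backlogs evolve as $Q_j(t+1)=(Q_j(t)-D_j(t))^++A_j(t+1)$, $Q_j(0)=A_j(0)$, where $D_j(t)\in\{0,1\}$ is the departure from queue $j$ in slot $t$. $V_i(t)$ denotes the number of slots since queue $i$ was last scheduled. The LEQ policy serves the queue scheduled in the previous slot (the incumbent) exhaustively, i.e., it keeps scheduling it as long as it is nonempty; whenever the incumbent is found empty at the beginning of a slot, it schedules in that slot the queue $\arg\max_{1\le i\le N}\lambda_iV_i(t)$ (if that queue is empty the slot carries no packet). The system is stable if the Markov chain describing the system backlog is positive recurrent. *)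

theory Defs
  imports "HOL-Probability.Probability"
begin

fun first_passage :: "('s \<Rightarrow> 's pmf) \<Rightarrow> 's set \<Rightarrow> nat \<Rightarrow> 's \<Rightarrow> real" where
  "first_passage K S 0 x = 0"
| "first_passage K S (Suc 0) x = measure_pmf.prob (K x) S"
| "first_passage K S (Suc (Suc n)) x =
     measure_pmf.expectation (K x) (\<lambda>y. if y \<in> S then 0 else first_passage K S (Suc n) y)"

definition positive_recurrent_state :: "('s \<Rightarrow> 's pmf) \<Rightarrow> 's \<Rightarrow> bool" where
  "positive_recurrent_state K s \<longleftrightarrow>
     (\<lambda>n. first_passage K {s} n s) sums 1 \<and>
     summable (\<lambda>n. real n * first_passage K {s} n s)"

inductive reachable :: "'s pmf \<Rightarrow> ('s \<Rightarrow> 's pmf) \<Rightarrow> 's \<Rightarrow> bool" for init K where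
  init: "x \<in> set_pmf init \<Longrightarrow> reachable init K x"
| step: "reachable init K x \<Longrightarrow> y \<in> set_pmf (K x) \<Longrightarrow> reachable init K y"

text \<open>Positive recurrence of the chain (init, K): from every reachable state
  the chain enters the set of positive recurrent states with probability 1.
  For an irreducible chain this is the usual notion (all states positive
  recurrent); it also tolerates transient start-up states.\<close>
definition positive_recurrent_chain :: "'s pmf \<Rightarrow> ('s \<Rightarrow> 's pmf) \<Rightarrow> bool" where
  "positive_recurrent_chain init K \<longleftrightarrow>
     (\<forall>x. reachable init K x \<longrightarrow>
        (\<lambda>n. first_passage K {y. positive_recurrent_state K y} n x) sums 1)"

text \<open>System state: (Q, V, c) where Q i = backlog of queue i, V i = slots since
  queue i was last scheduled, c = queue scheduled in the previous slot
  (the incumbent; c = 0 means none, i.e. at t = 0). Queues are 1..N;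
  components outside 1..N are kept at 0.\<close>
type_synonym qstate = "(nat \<Rightarrow> nat) \<times> (nat \<Rightarrow> nat) \<times> nat"

definition leq_argmax :: "nat \<Rightarrow> (nat \<Rightarrow> real) \<Rightarrow> (nat \<Rightarrow> nat) \<Rightarrow> nat" where
  "leq_argmax N lam V =
     (LEAST i. i \<in> {1..N} \<and> (\<forall>j\<in>{1..N}. lam j * real (V j) \<le> lam i * real (V i)))"

definition leq_sched :: "nat \<Rightarrow> (nat \<Rightarrow> real) \<Rightarrow> qstate \<Rightarrow> nat" where
  "leq_sched N lam st = (case st of (Q, V, c) \<Rightarrow>
     if c \<in> {1..N} \<and> Q c > 0 then c else leq_argmax N lam V)"

definition arrivals :: "nat \<Rightarrow> (nat \<Rightarrow> real) \<Rightarrow> (nat \<Rightarrow> bool) pmf" where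
  "arrivals N lam = Pi_pmf {1..N} False (\<lambda>j. bernoulli_pmf (lam j))"

definition leq_kernel :: "nat \<Rightarrow> (nat \<Rightarrow> real) \<Rightarrow> qstate \<Rightarrow> qstate pmf" where
  "leq_kernel N lam st = (case st of (Q, V, c) \<Rightarrow>
     (let s = leq_sched N lam st;
          D = (\<lambda>j. if j = s \<and> Q j > 0 then 1 else 0 :: nat)
      in map_pmf (\<lambda>A.
           ((\<lambda>j. if j \<in> {1..N} then (Q j - D j) + (if A j then 1 else 0) else 0),
            (\<lambda>j. if j \<in> {1..N} then (if j = s then 1 else V j + 1) else 0),
            s))
         (arrivals N lam)))"

definition leq_init :: "nat \<Rightarrow> (nat \<Rightarrow> real) \<Rightarrow> qstate pmf" where
  "leq_init N lam =
     map_pmf (\<lambda>A. ((\<lambda>j. if A j then 1 else 0), (\<lambda>_. 0), 0)) (arrivals N lam)"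

definition leq_stable :: "nat \<Rightarrow> (nat \<Rightarrow> real) \<Rightarrow> bool" where
  "leq_stable N lam \<longleftrightarrow> positive_recurrent_chain (leq_init N lam) (leq_kernel N lam)"

end

theory Submission
  imports Defs
begin


locale fk =
  fixes K :: "'s \<Rightarrow> 's pmf"
  assumes fin: "finite (set_pmf (K x))"
begin

definition E :: "('s \<Rightarrow> real) \<Rightarrow> 's \<Rightarrow> real" where
  "E f x = (\<Sum>y\<in>set_pmf (K x). pmf (K x) y * f y)"

definition P :: "'s set \<Rightarrow> ('s \<Rightarrow> real) \<Rightarrow> 's \<Rightarrow> real" where
  "P S f x = E (\<lambda>y. if y \<in> S then 0 else f y) x"

definition tp :: "'s set \<Rightarrow> nat \<Rightarrow> 's \<Rightarrow> real" where
  "tp S n = (P S ^^ n) (\<lambda>_. 1)"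

definition Sm :: "'s set \<Rightarrow> nat \<Rightarrow> 's \<Rightarrow> real" where
  "Sm S n x = (\<Sum>k<n. tp S k x)"

lemma E_eq: "measure_pmf.expectation (K x) f = E f x"
  unfolding E_def
  by (subst integral_measure_pmf_real[where A="set_pmf (K x)"]) (auto simp: fin mult.commute)

lemma E_mono: "(\<And>y. y \<in> set_pmf (K x) \<Longrightarrow> f y \<le> g y) \<Longrightarrow> E f x \<le> E g x"
  unfolding E_def by (intro sum_mono mult_left_mono) auto

lemma E_const[simp]: "E (\<lambda>_. c) x = c"
  unfolding E_def using sum_pmf_eq_1[OF fin[of x] order_refl]
  by (simp add: sum_distrib_right[symmetric])

lemma E_add: "E (\<lambda>y. f y + g y) x = E f x + E g x"
  unfolding E_def by (simp add: distrib_left sum.distrib)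

lemma E_cmult: "E (\<lambda>y. c * f y) x = c * E f x"
  unfolding E_def by (simp add: sum_distrib_left algebra_simps)

lemma E_sum: "E (\<lambda>y. \<Sum>i\<in>I. f i y) x = (\<Sum>i\<in>I. E (f i) x)"
  unfolding E_def by (simp add: sum_distrib_left sum.swap[of _ I])

lemma E_nonneg: "(\<And>y. y \<in> set_pmf (K x) \<Longrightarrow> 0 \<le> f y) \<Longrightarrow> 0 \<le> E f x"
  using E_mono[of x "\<lambda>_. 0" f] by simp

lemma P_mono: "(\<And>y. y \<in> set_pmf (K x) \<Longrightarrow> y \<notin> S \<Longrightarrow> f y \<le> g y) \<Longrightarrow> P S f x \<le> P S g x"
  unfolding P_def by (intro E_mono) auto

lemma P_add: "P S (\<lambda>y. f y + g y) x = P S f x + P S g x"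
  unfolding P_def E_def sum.distrib[symmetric] by (intro sum.cong) (auto simp: algebra_simps)

lemma P_cmult: "P S (\<lambda>y. c * f y) x = c * P S f x"
  unfolding P_def E_def sum_distrib_left by (intro sum.cong) auto

lemma P_sum: "P S (\<lambda>y. \<Sum>i\<in>I. f i y) x = (\<Sum>i\<in>I. P S (f i) x)"
  unfolding P_def E_def by (subst sum.swap) (auto simp: sum_distrib_left intro!: sum.cong)

lemma P_nonneg: "(\<And>y. y \<in> set_pmf (K x) \<Longrightarrow> y \<notin> S \<Longrightarrow> 0 \<le> f y) \<Longrightarrow> 0 \<le> P S f x"
  unfolding P_def by (intro E_nonneg) auto

lemma P_le_E: "(\<And>y. y \<in> set_pmf (K x) \<Longrightarrow> 0 \<le> f y) \<Longrightarrow> P S f x \<le> E f x"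
  unfolding P_def by (intro E_mono) auto

lemma P_one_le: "P S (\<lambda>_. 1) x \<le> 1"
  using P_le_E[of x "\<lambda>_. 1" S] by simp

lemma tp_0[simp]: "tp S 0 x = 1" by (simp add: tp_def)
lemma tp_Suc: "tp S (Suc n) x = P S (tp S n) x" by (simp add: tp_def)

lemma tp_bounds: "0 \<le> tp S n x \<and> tp S n x \<le> 1"
proof (induction n arbitrary: x)
  case 0 then show ?case by simp
next
  case (Suc n)
  have "P S (tp S n) x \<le> P S (\<lambda>_. 1) x" by (intro P_mono) (use Suc in auto)
  then show ?case using P_one_le[of S x] P_nonneg[of x S "tp S n"] Suc by (auto simp: tp_Suc)
qed

lemma tp_antimono: "tp S (Suc n) x \<le> tp S n x"
proof (induction n arbitrary: x)
  case 0 then show ?case using P_one_le by (simp add: tp_def)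
next
  case (Suc n)
  then show ?case unfolding tp_Suc[of S "Suc n"] tp_Suc[of S n] by (intro P_mono) (auto simp: tp_Suc)
qed

lemma tp_antimono': "m \<le> n \<Longrightarrow> tp S n x \<le> tp S m x"
proof (induction n)
  case 0 then show ?case by simp
next
  case (Suc n) then show ?case using tp_antimono[of S n x] by (cases "m = Suc n") auto
qed

lemma Sm_Suc: "Sm S (Suc n) x = 1 + P S (Sm S n) x"
  unfolding Sm_def by (simp add: sum.lessThan_Suc_shift tp_Suc P_sum del: sum.lessThan_Suc)

lemma Pn_Suc: "(P S ^^ Suc m) f x = P S ((P S ^^ m) f) x" by simp

lemma Pn_lin: "(P S ^^ m) (\<lambda>y. f y + c * g y) x = (P S ^^ m) f x + c * (P S ^^ m) g x"
proof (induction m arbitrary: x)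
  case 0 then show ?case by simp
next
  case (Suc m)
  have "(P S ^^ m) (\<lambda>y. f y + c * g y) = (\<lambda>x. (P S ^^ m) f x + c * (P S ^^ m) g x)"
    using Suc by auto
  then show ?case by (simp add: P_add P_cmult)
qed

lemma Pn_sum: "(P S ^^ m) (\<lambda>y. \<Sum>i\<in>I. f i y) x = (\<Sum>i\<in>I. (P S ^^ m) (f i) x)"
proof (induction m arbitrary: x)
  case 0 then show ?case by simp
next
  case (Suc m)
  have "(P S ^^ m) (\<lambda>y. \<Sum>i\<in>I. f i y) = (\<lambda>x. \<Sum>i\<in>I. (P S ^^ m) (f i) x)"
    using Suc by auto
  then show ?case by (simp add: P_sum)
qed

lemma Sm_add: "Sm S (m + n) x = Sm S m x + (P S ^^ m) (Sm S n) x"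
proof (induction m arbitrary: x)
  case 0 then show ?case by (simp add: Sm_def)
next
  case (Suc m)
  have "Sm S (Suc m + n) x = 1 + P S (Sm S (m + n)) x" using Sm_Suc by simp
  also have "\<dots> = 1 + P S (\<lambda>y. Sm S m y + 1 * (P S ^^ m) (Sm S n) y) x"
  proof -
    have "Sm S (m + n) = (\<lambda>y. Sm S m y + 1 * (P S ^^ m) (Sm S n) y)" using Suc by auto
    then show ?thesis by simp
  qed
  also have "\<dots> = Sm S (Suc m) x + (P S ^^ Suc m) (Sm S n) x"
    by (simp only: P_add P_cmult Sm_Suc Pn_Suc)
  finally show ?case .
qed

lemma P_one: "P S (\<lambda>_. 1) x = 1 - measure_pmf.prob (K x) S"
proof -
  have "measure_pmf.prob (K x) S = measure_pmf.prob (K x) (S \<inter> set_pmf (K x))"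
    by (simp add: measure_Int_set_pmf)
  also have "\<dots> = (\<Sum>y\<in>set_pmf (K x) \<inter> S. pmf (K x) y)"
    by (subst measure_measure_pmf_finite) (auto simp: fin Int_commute)
  finally have 1: "measure_pmf.prob (K x) S = (\<Sum>y\<in>set_pmf (K x) \<inter> S. pmf (K x) y)" .
  have 2: "P S (\<lambda>_. 1) x = (\<Sum>y\<in>set_pmf (K x) - S. pmf (K x) y)"
    unfolding P_def E_def by (auto simp: if_distrib sum.If_cases fin Diff_eq)
  have "(\<Sum>y\<in>set_pmf (K x) \<inter> S. pmf (K x) y) + (\<Sum>y\<in>set_pmf (K x) - S. pmf (K x) y) = 1"
    using sum.Int_Diff[OF fin[of x], of "pmf (K x)" S] sum_pmf_eq_1[OF fin[of x] order_refl] by simp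
  then show ?thesis using 1 2 by simp
qed

lemma fp_Suc_Suc: "first_passage K S (Suc (Suc k)) x = P S (first_passage K S (Suc k)) x"
  by (simp add: E_eq P_def)

lemma fp_tp: "(\<Sum>k<n. first_passage K S (Suc k) x) = 1 - tp S n x"
proof (induction n arbitrary: x)
  case 0 then show ?case by simp
next
  case (Suc n)
  have "(\<Sum>k<Suc n. first_passage K S (Suc k) x)
      = first_passage K S (Suc 0) x + (\<Sum>k<n. first_passage K S (Suc (Suc k)) x)"
    by (simp add: sum.lessThan_Suc_shift del: sum.lessThan_Suc)
  also have "(\<Sum>k<n. first_passage K S (Suc (Suc k)) x) = P S (\<lambda>y. \<Sum>k<n. first_passage K S (Suc k) y) x"
    by (simp only: fp_Suc_Suc P_sum)
  also have "(\<lambda>y. \<Sum>k<n. first_passage K S (Suc k) y) = (\<lambda>y. 1 + (-1) * tp S n y)"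
    using Suc by auto
  also have "P S \<dots> x = P S (\<lambda>_. 1) x - tp S (Suc n) x"
    by (subst P_add, subst P_cmult) (simp add: tp_Suc)
  finally show ?case by (simp add: P_one)
qed

lemma fp_Suc: "first_passage K S (Suc k) x = tp S k x - tp S (Suc k) x"
  using fp_tp[where S=S and n="Suc k" and x=x] fp_tp[where S=S and n=k and x=x] by simp

lemma fp_nonneg: "0 \<le> first_passage K S k x"
  by (cases k) (auto simp: fp_Suc tp_antimono)

lemma Sm_nonneg: "0 \<le> Sm S n x"
  unfolding Sm_def using tp_bounds by (simp add: sum_nonneg)

lemma Sm_le: "Sm S n x \<le> real n"
proof -
  have "Sm S n x \<le> (\<Sum>k<n. 1)" unfolding Sm_def using tp_bounds by (intro sum_mono) auto
  then show ?thesis by simp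
qed

lemma Sm_mono: "m \<le> n \<Longrightarrow> Sm S m x \<le> Sm S n x"
  unfolding Sm_def using tp_bounds by (intro sum_mono2) auto

lemma tp_summable: "(\<And>n. Sm S n x \<le> B) \<Longrightarrow> summable (\<lambda>n. tp S n x)"
  by (rule summableI_nonneg_bounded[where x=B]) (use tp_bounds in \<open>auto simp: Sm_def\<close>)

lemma tp_lim: "(\<And>n. Sm S n x \<le> B) \<Longrightarrow> (\<lambda>n. tp S n x) \<longlonglongrightarrow> 0"
  using tp_summable summable_LIMSEQ_zero by blast

lemma fp_sums: assumes "\<And>n. Sm S n x \<le> B" shows "(\<lambda>n. first_passage K S n x) sums 1"
proof -
  have "(\<lambda>n. 1 - tp S n x) \<longlonglongrightarrow> 1 - 0"
    by (intro tendsto_diff tendsto_const tp_lim[OF assms])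
  moreover have "(\<Sum>k<Suc n. first_passage K S k x) = 1 - tp S n x" for n
    by (simp add: sum.lessThan_Suc_shift fp_tp del: sum.lessThan_Suc)
  ultimately have "(\<lambda>n. \<Sum>k<Suc n. first_passage K S k x) \<longlonglongrightarrow> 1" by simp
  then show ?thesis unfolding sums_def by (subst (asm) filterlim_sequentially_Suc)
qed

lemma nfp_identity: "(\<Sum>k<Suc n. real k * first_passage K S k x) + real n * tp S n x = Sm S n x"
proof (induction n)
  case 0 then show ?case by (simp add: Sm_def)
next
  case (Suc n)
  then show ?case by (simp add: Sm_def fp_Suc algebra_simps)
qed

lemma nfp_summable: assumes "\<And>n. Sm S n x \<le> B" shows "summable (\<lambda>n. real n * first_passage K S n x)"
proof (rule summableI_nonneg_bounded[where x=B])
  show "0 \<le> real n * first_passage K S n x" for n using fp_nonneg by simp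
  show "(\<Sum>k<n. real k * first_passage K S k x) \<le> B" for n
  proof -
    have "(\<Sum>k<n. real k * first_passage K S k x) \<le> (\<Sum>k<Suc n. real k * first_passage K S k x)"
      using fp_nonneg by simp
    also have "\<dots> \<le> Sm S n x"
    proof -
      have "0 \<le> real n * tp S n x" using tp_bounds[of S n x] by simp
      then show ?thesis using nfp_identity[where n=n and S=S and x=x] by linarith
    qed
    finally show ?thesis using assms[of n] by simp
  qed
qed

lemma Pn_mono:
  assumes closed: "\<And>x y. x \<in> R \<Longrightarrow> y \<in> set_pmf (K x) \<Longrightarrow> y \<in> R"
  shows "(\<And>y. y \<in> R \<Longrightarrow> f y \<le> g y) \<Longrightarrow> x \<in> R \<Longrightarrow> (P S ^^ m) f x \<le> (P S ^^ m) g x"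
proof (induction m arbitrary: x)
  case 0 then show ?case by simp
next
  case (Suc m) then show ?case using closed by (simp only: Pn_Suc) (intro P_mono, blast)
qed

lemma Pn_nonneg:
  assumes closed: "\<And>x y. x \<in> R \<Longrightarrow> y \<in> set_pmf (K x) \<Longrightarrow> y \<in> R"
  shows "(\<And>y. y \<in> R \<Longrightarrow> 0 \<le> f y) \<Longrightarrow> x \<in> R \<Longrightarrow> 0 \<le> (P S ^^ m) f x"
proof (induction m arbitrary: x)
  case 0 then show ?case by simp
next
  case (Suc m) then show ?case using closed by (simp only: Pn_Suc) (intro P_nonneg, blast)
qed

lemma foster:
  assumes closed: "\<And>x y. x \<in> R \<Longrightarrow> y \<in> set_pmf (K x) \<Longrightarrow> y \<in> R"
    and U0: "\<And>x. x \<in> R \<Longrightarrow> 0 \<le> U x"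
    and out: "\<And>x. x \<in> R \<Longrightarrow> x \<notin> F \<Longrightarrow> 1 + P S U x \<le> U x"
    and inF: "\<And>x. x \<in> R \<Longrightarrow> x \<in> F \<Longrightarrow> Sm S m x + (P S ^^ m) U x \<le> U x"
    and m: "1 \<le> m"
  shows "x \<in> R \<Longrightarrow> Sm S n x \<le> U x"
proof (induction n arbitrary: x rule: less_induct)
  case (less n)
  show ?case
  proof (cases n)
    case 0 then show ?thesis using U0 less by (simp add: Sm_def)
  next
    case (Suc k)
    show ?thesis
    proof (cases "x \<in> F")
      case False
      have "Sm S n x = 1 + P S (Sm S k) x" using Suc Sm_Suc by simp
      also have "\<dots> \<le> 1 + P S U x"
        using less.IH[of k] Suc closed less.prems by (auto intro!: P_mono)
      also have "\<dots> \<le> U x" using out less.prems False by simp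
      finally show ?thesis .
    next
      case True
      have Pn0: "0 \<le> (P S ^^ m) U x"
        using Pn_nonneg[OF closed, where f=U and x=x and S=S and m=m] U0 less.prems by simp
      show ?thesis
      proof (cases "n \<le> m")
        case True
        then have "Sm S n x \<le> Sm S m x" by (rule Sm_mono)
        then show ?thesis using inF[OF less.prems \<open>x \<in> F\<close>] Pn0 by simp
      next
        case False
        then obtain j where j: "n = m + j" "j < n" using m by (metis add_diff_inverse_nat le_add_diff_inverse2 less_or_eq_imp_le not_less_eq_eq add_lessD1 diff_less less_le_trans zero_less_one le_eq_less_or_eq nat_le_linear)
        have "Sm S n x = Sm S m x + (P S ^^ m) (Sm S j) x" using j Sm_add by simp
        also have "\<dots> \<le> Sm S m x + (P S ^^ m) U x"
          using Pn_mono[OF closed, where f="Sm S j" and g=U and x=x and S=S and m=m] less.IH[OF j(2)] less.prems by simp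
        also have "\<dots> \<le> U x" using inF[OF less.prems True] .
        finally show ?thesis .
      qed
    qed
  qed
qed

lemma foster_out:
  assumes closed: "\<And>x y. x \<in> R \<Longrightarrow> y \<in> set_pmf (K x) \<Longrightarrow> y \<in> R"
    and out: "\<And>x. x \<in> R \<Longrightarrow> x \<notin> S \<Longrightarrow> 1 + P S U x \<le> U x"
    and U0: "\<And>x. x \<in> R \<Longrightarrow> 0 \<le> U x"
  shows "x \<in> R \<Longrightarrow> x \<notin> S \<Longrightarrow> Sm S n x \<le> U x"
proof (induction n arbitrary: x)
  case 0 then show ?case using U0 by (simp add: Sm_def)
next
  case (Suc n)
  have "Sm S (Suc n) x = 1 + P S (Sm S n) x" using Sm_Suc by simp
  also have "\<dots> \<le> 1 + P S U x" using Suc closed by (auto intro!: P_mono)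
  also have "\<dots> \<le> U x" using out Suc by simp
  finally show ?case .
qed

abbreviation st :: "'s \<Rightarrow> 's \<Rightarrow> bool" where "st x y \<equiv> y \<in> set_pmf (K x)"

lemma E_lt1: assumes "\<And>y. y \<in> set_pmf (K x) \<Longrightarrow> f y \<le> 1" "z \<in> set_pmf (K x)" "f z < 1"
  shows "E f x < 1"
proof -
  have "E f x < (\<Sum>y\<in>set_pmf (K x). pmf (K x) y * 1)"
    unfolding E_def
  proof (rule sum_strict_mono_ex1[OF fin])
    show "\<forall>y\<in>set_pmf (K x). pmf (K x) y * f y \<le> pmf (K x) y * 1"
    proof
      fix y assume "y \<in> set_pmf (K x)"
      then show "pmf (K x) y * f y \<le> pmf (K x) y * 1" using assms(1) by (intro mult_left_mono) auto
    qed
    show "\<exists>y\<in>set_pmf (K x). pmf (K x) y * f y < pmf (K x) y * 1"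
      using assms(2,3) by (intro bexI[of _ z]) (auto simp: pmf_positive)
  qed
  then show ?thesis using sum_pmf_eq_1[OF fin[of x] order_refl] by simp
qed

lemma path_tp: "st\<^sup>+\<^sup>+ x z \<Longrightarrow> z \<in> S \<Longrightarrow> \<exists>n. tp S n x < 1"
proof (induction x rule: converse_tranclp_induct)
  case (base y)
  have "tp S (Suc 0) y = E (\<lambda>w. if w \<in> S then 0 else 1) y" by (simp add: tp_def P_def)
  also have "\<dots> < 1" by (rule E_lt1[OF _ base(1)]) (use base in auto)
  finally show ?case by blast
next
  case (step y w)
  then obtain n where n: "tp S n w < 1" by blast
  have "tp S (Suc n) y = E (\<lambda>v. if v \<in> S then 0 else tp S n v) y" by (simp add: tp_Suc P_def)
  also have "\<dots> < 1" by (rule E_lt1[OF _ step(1)]) (use n tp_bounds in auto)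
  finally show ?case by blast
qed

lemma tp_path: "tp S n x < 1 \<Longrightarrow> \<exists>z\<in>S. st\<^sup>+\<^sup>+ x z"
proof (induction n arbitrary: x)
  case 0 then show ?case by simp
next
  case (Suc n)
  show ?case
  proof (rule ccontr)
    assume no: "\<not> (\<exists>z\<in>S. st\<^sup>+\<^sup>+ x z)"
    have "1 \<le> P S (tp S n) x"
    proof -
      have "P S (\<lambda>_. 1) x \<le> P S (tp S n) x"
      proof (rule P_mono)
        fix y assume y: "y \<in> set_pmf (K x)" "y \<notin> S"
        show "1 \<le> tp S n y"
        proof (rule ccontr)
          assume "\<not> 1 \<le> tp S n y"
          then obtain z where "z \<in> S" "st\<^sup>+\<^sup>+ y z" using Suc.IH by force
          then show False using no y by (meson tranclp_into_tranclp2)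
        qed
      qed
      moreover have "P S (\<lambda>_. 1) x = 1"
      proof -
        have "P S (\<lambda>_. 1) x = E (\<lambda>_. 1) x" unfolding P_def E_def
          using no by (intro sum.cong) auto
        then show ?thesis by simp
      qed
      ultimately show ?thesis by simp
    qed
    then show False using Suc.prems by (simp add: tp_Suc)
  qed
qed


lemma hit_bound:
  assumes closed: "\<And>x y. x \<in> R \<Longrightarrow> y \<in> set_pmf (K x) \<Longrightarrow> y \<in> R"
    and finF: "finite F"
    and L0: "\<And>x. x \<in> R \<Longrightarrow> 0 \<le> L x"
    and drift: "\<And>x. x \<in> R \<Longrightarrow> x \<notin> F \<Longrightarrow> 1 + E L x \<le> L x"
    and reach: "\<And>y. y \<in> F \<Longrightarrow> y \<in> R \<Longrightarrow> \<exists>z\<in>S. st\<^sup>+\<^sup>+ y z"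
  shows "\<exists>U. \<forall>x\<in>R. \<forall>n. Sm S n x \<le> U x"
proof -
  define G where "G = F \<inter> R"
  have finG: "finite G" using finF by (simp add: G_def)
  have "\<forall>y\<in>G. \<exists>n. tp S n y < 1"
  proof
    fix y assume "y \<in> G"
    then obtain z where "z \<in> S" "st\<^sup>+\<^sup>+ y z" using reach unfolding G_def by blast
    then show "\<exists>n. tp S n y < 1" using path_tp by blast
  qed
  then obtain nf where nf: "\<And>y. y \<in> G \<Longrightarrow> tp S (nf y) y < 1" by metis
  define m where "m = Suc (Max (insert 0 (nf ` G)))"
  have m1: "1 \<le> m" by (simp add: m_def)
  have tpm: "tp S m y < 1" if "y \<in> G" for y
  proof -
    have "nf y \<le> m" using that finG by (auto simp: m_def intro!: le_SucI Max_ge)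
    then show ?thesis using tp_antimono'[of "nf y" m S y] nf[OF that] by simp
  qed
  define \<delta> where "\<delta> = Min (insert 1 ((\<lambda>y. 1 - tp S m y) ` G))"
  have \<delta>pos: "0 < \<delta>" unfolding \<delta>_def using finG tpm by (subst Min_gr_iff) auto
  have \<delta>le: "\<delta> \<le> 1 - tp S m y" if "y \<in> G" for y unfolding \<delta>_def using finG that by (intro Min_le) auto
  define B0 where "B0 = Max (insert 0 ((\<lambda>y. (P S ^^ m) L y) ` G))"
  have B0ge: "(P S ^^ m) L y \<le> B0" if "y \<in> G" for y unfolding B0_def using finG that by (intro Max_ge) auto
  have B00: "0 \<le> B0" unfolding B0_def using finG by (intro Max_ge) auto
  define C where "C = (real m + B0) / \<delta>"
  have C0: "0 \<le> C" unfolding C_def using \<delta>pos B00 by simp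
  have Cd: "C * \<delta> = real m + B0" unfolding C_def using \<delta>pos by simp
  define U where "U = (\<lambda>x. L x + C)"
  have PU: "P S U x = P S L x + C * P S (\<lambda>_. 1) x" for x
  proof -
    have "P S U x = P S (\<lambda>y. L y + C * 1) x" by (simp add: U_def)
    then show ?thesis by (simp only: P_add P_cmult)
  qed
  have PnU: "(P S ^^ m) U x = (P S ^^ m) L x + C * tp S m x" for x
  proof -
    have "(P S ^^ m) U x = (P S ^^ m) (\<lambda>y. L y + C * 1) x" by (simp add: U_def)
    then show ?thesis by (simp only: Pn_lin tp_def)
  qed
  have "Sm S n x \<le> U x" if "x \<in> R" for x n
  proof (rule foster[OF closed _ _ _ m1 that])
    show "0 \<le> U x" if "x \<in> R" for x using L0[OF that] C0 by (simp add: U_def)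
    show "1 + P S U x \<le> U x" if "x \<in> R" "x \<notin> F" for x
    proof -
      have "P S L x \<le> E L x" by (rule P_le_E) (use closed L0 that in blast)
      moreover have "C * P S (\<lambda>_. 1) x \<le> C" using C0 P_one_le[of S x] by (simp add: mult_left_le)
      ultimately show ?thesis using drift[OF that] PU[of x] by (simp add: U_def)
    qed
    show "Sm S m x + (P S ^^ m) U x \<le> U x" if "x \<in> R" "x \<in> F" for x
    proof -
      have G: "x \<in> G" using that by (simp add: G_def)
      have "Sm S m x + (P S ^^ m) U x \<le> real m + B0 + C * (1 - \<delta>)"
      proof -
        have "C * tp S m x \<le> C * (1 - \<delta>)" using \<delta>le[OF G] C0 by (intro mult_left_mono) auto
        then show ?thesis using Sm_le[of S m x] B0ge[OF G] PnU[of x] by linarith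
      qed
      also have "\<dots> = C" using Cd by (simp add: algebra_simps)
      finally show ?thesis using L0[OF that(1)] by (simp add: U_def)
    qed
  qed
  then show ?thesis by blast
qed

lemma rt_closed:
  "st\<^sup>*\<^sup>* x y \<Longrightarrow> \<forall>a b. a \<in> R \<longrightarrow> st a b \<longrightarrow> b \<in> R \<Longrightarrow> x \<in> R \<Longrightarrow> y \<in> R"
proof (induction rule: rtranclp_induct)
  case base then show ?case by simp
next
  case (step y z) then show ?case by blast
qed

lemma t_closed:
  "st\<^sup>+\<^sup>+ x y \<Longrightarrow> \<forall>a b. a \<in> R \<longrightarrow> st a b \<longrightarrow> b \<in> R \<Longrightarrow> x \<in> R \<Longrightarrow> y \<in> R"
  by (rule rt_closed[OF tranclp_into_rtranclp])

theorem generic: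
  assumes closed: "\<And>x y. x \<in> R \<Longrightarrow> y \<in> set_pmf (K x) \<Longrightarrow> y \<in> R"
    and finF: "finite F" and FR: "F \<subseteq> R"
    and L0: "\<And>x. x \<in> R \<Longrightarrow> 0 \<le> L x"
    and drift: "\<And>x. x \<in> R \<Longrightarrow> x \<notin> F \<Longrightarrow> 1 + E L x \<le> L x"
    and xR: "x \<in> R"
  shows "(\<lambda>n. first_passage K {y. positive_recurrent_state K y} n x) sums 1"
proof -
  have closedA: "\<forall>a b. a \<in> R \<longrightarrow> st a b \<longrightarrow> b \<in> R" using closed by blast
  have reach_out: "\<exists>w\<in>F. st\<^sup>+\<^sup>+ y w" if "y \<in> R" "y \<notin> F" for y
  proof -
    have "Sm F n y \<le> L y" for n
    proof (rule foster_out[OF closed _ L0 that])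
      show "1 + P F L x \<le> L x" if "x \<in> R" "x \<notin> F" for x
        using P_le_E[of x L F] closed L0 drift[OF that] that(1) by fastforce
    qed
    then have "(\<lambda>n. tp F n y) \<longlonglongrightarrow> 0" by (rule tp_lim)
    then have "eventually (\<lambda>n. tp F n y < 1) sequentially" by (rule order_tendstoD) simp
    then obtain n where "tp F n y < 1" by (meson eventually_sequentially order_refl)
    then show ?thesis by (rule tp_path)
  qed
  have reachF: "\<exists>w\<in>F. st\<^sup>+\<^sup>+ y w" if yR: "y \<in> R" for y
  proof (cases "y \<in> F")
    case False then show ?thesis using reach_out yR by blast
  next
    case True
    obtain v where v: "v \<in> set_pmf (K y)" using set_pmf_not_empty by fast
    show ?thesis
    proof (cases "v \<in> F")
      case True then show ?thesis using v by blast
    next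
      case False
      then obtain w where "w \<in> F" "st\<^sup>+\<^sup>+ v w" using reach_out closed[OF yR v] by blast
      then show ?thesis using v tranclp_into_tranclp2[of st y v w] by blast
    qed
  qed
  define rs where "rs z = {w\<in>F. st\<^sup>+\<^sup>+ z w}" for z
  have rs_fin: "finite (rs z)" for z using finF by (simp add: rs_def)
  have rs_sub: "st\<^sup>+\<^sup>+ a b \<Longrightarrow> rs b \<subseteq> rs a" for a b
    unfolding rs_def using tranclp_trans[of st a b] by blast
  define T where "T = {z\<in>F. \<forall>x. st\<^sup>+\<^sup>+ z x \<longrightarrow> st\<^sup>+\<^sup>+ x z}"
  have claim1: "\<exists>z\<in>T. st\<^sup>+\<^sup>+ y z" if yR: "y \<in> R" for y
  proof -
    obtain z00 where "z00 \<in> F" "st\<^sup>+\<^sup>+ y z00" using reachF[OF yR] by blast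
    then obtain z0 where z0: "z0 \<in> rs y" and z0min: "\<And>w. w \<in> rs y \<Longrightarrow> card (rs z0) \<le> card (rs w)"
      using ex_has_least_nat[of "\<lambda>w. w \<in> rs y" z00 "\<lambda>w. card (rs w)"] by (auto simp: rs_def)
    have "z0 \<in> R" using z0 FR by (auto simp: rs_def)
    then obtain z1 where z1: "z1 \<in> F" "st\<^sup>+\<^sup>+ z0 z1" using reachF by blast
    have z1y: "st\<^sup>+\<^sup>+ y z1" using z0 z1 tranclp_trans[of st y z0 z1] by (simp add: rs_def)
    have eq_of: "rs w = rs z0" if "w \<in> rs y" "rs w \<subseteq> rs z0" for w
      using card_subset_eq[OF rs_fin that(2)] z0min[OF that(1)] card_mono[OF rs_fin that(2)] by simp
    have rs1: "rs z1 = rs z0" using eq_of[of z1] z1 z1y rs_sub[OF z1(2)] by (simp add: rs_def)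
    have "z1 \<in> T"
    proof -
      have "st\<^sup>+\<^sup>+ x z1" if x: "st\<^sup>+\<^sup>+ z1 x" for x
      proof -
        have "x \<in> R" using t_closed[OF x closedA] z1 FR by auto
        then obtain w where w: "w \<in> F" "st\<^sup>+\<^sup>+ x w" using reachF by blast
        have zw: "st\<^sup>+\<^sup>+ z1 w" using x w tranclp_trans[of st z1 x w] by blast
        have yw: "st\<^sup>+\<^sup>+ y w" using z1y zw tranclp_trans[of st y z1 w] by blast
        have "rs w = rs z0" using eq_of[of w] rs_sub[OF zw] rs1 w yw by (simp add: rs_def)
        moreover have "z1 \<in> rs z0" using z1 by (simp add: rs_def)
        ultimately have "z1 \<in> rs w" by simp
        then have "st\<^sup>+\<^sup>+ w z1" by (simp add: rs_def)
        then show ?thesis using w tranclp_trans[of st x w z1] by blast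
      qed
      then show ?thesis using z1 by (simp add: T_def)
    qed
    then show ?thesis using z1y by blast
  qed
  have claim2: "positive_recurrent_state K z" if zT: "z \<in> T" for z
  proof -
    have zF: "z \<in> F" and zT': "\<And>x. st\<^sup>+\<^sup>+ z x \<Longrightarrow> st\<^sup>+\<^sup>+ x z" using zT unfolding T_def by auto
    have zR: "z \<in> R" using zF FR by blast
    define R' where "R' = {x. st\<^sup>*\<^sup>* z x}"
    have R'R: "x \<in> R" if "x \<in> R'" for x using rt_closed[OF _ closedA zR, of x] that by (simp add: R'_def)
    have closed': "y \<in> R'" if "x \<in> R'" "y \<in> set_pmf (K x)" for x y
      using that rtranclp.rtrancl_into_rtrancl[of st z x y] by (simp add: R'_def)
    have "\<exists>U. \<forall>x\<in>R'. \<forall>n. Sm {z} n x \<le> U x"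
    proof (rule hit_bound[OF closed' finF])
      show "0 \<le> L x" if "x \<in> R'" for x using L0[OF R'R[OF that]] .
      show "1 + E L x \<le> L x" if "x \<in> R'" "x \<notin> F" for x using drift[OF R'R[OF that(1)] that(2)] .
      show "\<exists>z'\<in>{z}. st\<^sup>+\<^sup>+ y z'" if yF: "y \<in> F" and yR': "y \<in> R'" for y
      proof (cases "y = z")
        case True
        obtain v where v: "v \<in> set_pmf (K z)" using set_pmf_not_empty by fast
        then have "st\<^sup>+\<^sup>+ z v" by (rule tranclp.r_into_trancl)
        then have "st\<^sup>+\<^sup>+ v z" by (rule zT')
        then have "st\<^sup>+\<^sup>+ z z" using v tranclp_into_tranclp2[of st z v z] by blast
        then show ?thesis using True by blast
      next
        case False
        have "st\<^sup>*\<^sup>* z y" using yR' by (simp add: R'_def)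
        then have "st\<^sup>+\<^sup>+ z y" using False rtranclpD[of st z y] by blast
        then show ?thesis using zT' by blast
      qed
    qed
    moreover have "z \<in> R'" by (simp add: R'_def)
    ultimately obtain U where "\<And>n. Sm {z} n z \<le> U z" by blast
    then show ?thesis unfolding positive_recurrent_state_def
      using fp_sums nfp_summable by blast
  qed
  have "\<exists>U. \<forall>x\<in>R. \<forall>n. Sm {y. positive_recurrent_state K y} n x \<le> U x"
  proof (rule hit_bound[OF closed finF L0 drift])
    show "\<exists>z\<in>{y. positive_recurrent_state K y}. st\<^sup>+\<^sup>+ y z" if "y \<in> F" "y \<in> R" for y
      using claim1[OF that(2)] claim2 by blast
  qed auto
  then obtain U where "\<And>n. Sm {y. positive_recurrent_state K y} n x \<le> U x" using xR by blast
  then show ?thesis by (rule fp_sums)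
qed

end


lemma arrivals_set: "set_pmf (arrivals N lam) \<subseteq> PiE_dflt {1..N} False (\<lambda>_. UNIV)"
  unfolding arrivals_def using set_Pi_pmf_subset[of "{1..N}" False] by (auto simp: PiE_dflt_def)

lemma arrivals_fin: "finite (set_pmf (arrivals N lam))"
  by (rule finite_subset[OF arrivals_set]) auto

lemma arrivals_out: "A \<in> set_pmf (arrivals N lam) \<Longrightarrow> j \<notin> {1..N} \<Longrightarrow> A j = False"
  using arrivals_set by (auto simp: PiE_dflt_def)

definition nxt :: "nat \<Rightarrow> (nat \<Rightarrow> real) \<Rightarrow> qstate \<Rightarrow> (nat \<Rightarrow> bool) \<Rightarrow> qstate" where
  "nxt N lam st A = (case st of (Q, V, c) \<Rightarrow>
     (let s = leq_sched N lam st;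
          D = (\<lambda>j. if j = s \<and> Q j > 0 then 1 else 0 :: nat)
      in ((\<lambda>j. if j \<in> {1..N} then (Q j - D j) + (if A j then 1 else 0) else 0),
            (\<lambda>j. if j \<in> {1..N} then (if j = s then 1 else V j + 1) else 0),
            s)))"

lemma kernel_map: "leq_kernel N lam st = map_pmf (nxt N lam st) (arrivals N lam)"
  unfolding leq_kernel_def nxt_def by (cases st) (simp add: Let_def)

lemma kernel_fin: "finite (set_pmf (leq_kernel N lam st))"
  by (simp add: kernel_map arrivals_fin)

lemma exp_indicator:
  assumes "j \<in> {1..N}" "0 \<le> lam j" "lam j \<le> 1"
  shows "measure_pmf.expectation (arrivals N lam) (\<lambda>A. if A j then 1 else 0) = lam j"
proof -
  have "measure_pmf.expectation (arrivals N lam) (\<lambda>A. if A j then 1 else 0)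
      = measure_pmf.expectation (map_pmf (\<lambda>f. f j) (arrivals N lam)) (\<lambda>b. if b then 1 else (0::real))"
    by simp
  also have "map_pmf (\<lambda>f. f j) (arrivals N lam) = bernoulli_pmf (lam j)"
    unfolding arrivals_def using assms by (subst Pi_pmf_component) auto
  also have "measure_pmf.expectation (bernoulli_pmf (lam j)) (\<lambda>b. if b then 1 else (0::real)) = lam j"
    by (subst integral_measure_pmf_real[where A="{True}"]) (use assms in \<open>auto split: if_splits\<close>)
  finally show ?thesis .
qed

lemma argmax_prop:
  assumes "N \<ge> 1"
  shows "leq_argmax N lam V \<in> {1..N} \<and>
         (\<forall>j\<in>{1..N}. lam j * real (V j) \<le> lam (leq_argmax N lam V) * real (V (leq_argmax N lam V)))"
proof -
  have "finite ((\<lambda>j. lam j * real (V j)) ` {1..N})" "(\<lambda>j. lam j * real (V j)) ` {1..N} \<noteq> {}"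
    using assms by auto
  then have "Max ((\<lambda>j. lam j * real (V j)) ` {1..N}) \<in> (\<lambda>j. lam j * real (V j)) ` {1..N}"
    by (rule Max_in)
  then obtain i where i0: "Max ((\<lambda>j. lam j * real (V j)) ` {1..N}) = lam i * real (V i)" "i \<in> {1..N}"
    by (rule imageE)
  then have i: "i \<in> {1..N}" "lam i * real (V i) = Max ((\<lambda>j. lam j * real (V j)) ` {1..N})" by simp_all
  have "\<forall>j\<in>{1..N}. lam j * real (V j) \<le> lam i * real (V i)"
    unfolding i(2) by (intro ballI Max_ge) auto
  with i(1) have ex: "\<exists>i. i \<in> {1..N} \<and> (\<forall>j\<in>{1..N}. lam j * real (V j) \<le> lam i * real (V i))" by blast
  show ?thesis unfolding leq_argmax_def by (rule LeastI_ex[OF ex])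
qed

definition linv :: "nat \<Rightarrow> qstate \<Rightarrow> bool" where
  "linv N st = (case st of (Q, V, c) \<Rightarrow> c \<le> N \<and> (\<forall>j. j \<notin> {1..N} \<longrightarrow> Q j = 0 \<and> V j = 0) \<and>
      (c \<in> {1..N} \<longrightarrow> V c = 1) \<and> (\<forall>j\<in>{1..N}. j \<noteq> c \<longrightarrow> Q j \<le> V j + 1))"

lemma sched_cases:
  assumes "N \<ge> 1"
  shows "leq_sched N lam (Q, V, c) \<in> {1..N} \<and>
    (if c \<in> {1..N} \<and> Q c > 0 then leq_sched N lam (Q, V, c) = c
     else leq_sched N lam (Q, V, c) = leq_argmax N lam V)"
  using argmax_prop[OF assms, of lam V] by (auto simp: leq_sched_def)

lemma sched_empty:
  assumes "N \<ge> 1" "s = leq_sched N lam (Q, V, c)" "Q s = 0"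
  shows "s = leq_argmax N lam V" "s \<in> {1..N}" "\<forall>j\<in>{1..N}. lam j * real (V j) \<le> lam s * real (V s)"
  using sched_cases[OF assms(1), of lam Q V c] argmax_prop[OF assms(1), of lam V] assms(2,3)
  by (auto split: if_splits)

lemma inv_step:
  assumes N: "N \<ge> 1" and inv: "linv N st" and A: "A \<in> set_pmf (arrivals N lam)"
  shows "linv N (nxt N lam st A)"
proof -
  obtain Q V c where st: "st = (Q, V, c)" by (cases st)
  define s where "s = leq_sched N lam st"
  have s: "s \<in> {1..N}" using sched_cases[OF N] by (simp add: s_def st)
  have sc: "s \<noteq> c \<Longrightarrow> c \<in> {1..N} \<Longrightarrow> Q c = 0"
    using sched_cases[OF N, of lam Q V c] by (auto simp: s_def st split: if_splits)
  have nx: "nxt N lam st A = ((\<lambda>j. if j \<in> {1..N} then (Q j - (if j = s \<and> Q j > 0 then 1 else 0)) + (if A j then 1 else 0) else 0),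
            (\<lambda>j. if j \<in> {1..N} then (if j = s then 1 else V j + 1) else 0), s)"
    unfolding nxt_def s_def st by (simp add: Let_def)
  have i: "c \<le> N" "\<And>j. j \<in> {1..N} \<Longrightarrow> j \<noteq> c \<Longrightarrow> Q j \<le> V j + 1"
    using inv unfolding linv_def st by auto
  have "Q j - (if j = s \<and> Q j > 0 then 1 else 0) + (if A j then 1 else 0) \<le> V j + 1 + 1"
    if j: "j \<in> {1..N}" "j \<noteq> s" for j
  proof (cases "j = c")
    case True then show ?thesis using sc j by auto
  next
    case False then show ?thesis using i(2)[OF j(1) False] j by auto
  qed
  then show ?thesis unfolding nx linv_def using s by auto
qed

lemma inv_init:
  assumes "x \<in> set_pmf (leq_init N lam)" shows "linv N x"
proof -
  obtain A where A: "A \<in> set_pmf (arrivals N lam)" "x = ((\<lambda>j. if A j then 1 else 0), (\<lambda>_. 0), 0)"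
    using assms unfolding leq_init_def by auto
  show ?thesis using arrivals_out[OF A(1)] unfolding A(2) linv_def by auto
qed

lemma reach_inv: assumes "N \<ge> 1" shows "reachable (leq_init N lam) (leq_kernel N lam) x \<Longrightarrow> linv N x"
proof (induction rule: reachable.induct)
  case (init x) then show ?case by (rule inv_init)
next
  case (step x y)
  then obtain A where A: "A \<in> set_pmf (arrivals N lam)" "y = nxt N lam x A" by (auto simp: kernel_map)
  show ?case unfolding A(2) by (rule inv_step[OF assms step.IH A(1)])
qed


definition Zp :: "(nat \<Rightarrow> real) \<Rightarrow> (nat \<Rightarrow> nat) \<Rightarrow> (nat \<Rightarrow> nat) \<Rightarrow> nat \<Rightarrow> real" where
  "Zp lam Q V j = max 0 (lam j * real (V j) - real (Q j))"

definition L0 :: "nat \<Rightarrow> (nat \<Rightarrow> real) \<Rightarrow> real \<Rightarrow> qstate \<Rightarrow> real" where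
  "L0 N lam \<kappa> st = (case st of (Q, V, c) \<Rightarrow>
     (\<Sum>j\<in>{1..N}. real (Q j)) + \<kappa> * (\<Sum>j\<in>{1..N}-{c}. Zp lam Q V j))"

lemma L0_nonneg: "0 \<le> \<kappa> \<Longrightarrow> 0 \<le> L0 N lam \<kappa> st"
  unfolding L0_def Zp_def by (cases st) (auto intro!: add_nonneg_nonneg sum_nonneg mult_nonneg_nonneg)

lemma step_bound:
  assumes N: "N \<ge> 1" and inv: "linv N (Q, V, c)"
    and lam0: "\<And>j. j \<in> {1..N} \<Longrightarrow> 0 \<le> lam j" and lam1: "\<And>j. j \<in> {1..N} \<Longrightarrow> lam j \<le> 1"
    and k0: "0 \<le> \<kappa>" and s: "s = leq_sched N lam (Q, V, c)"
  shows "L0 N lam \<kappa> (nxt N lam (Q, V, c) A) \<le> L0 N lam \<kappa> (Q, V, c) - (if Q s > 0 then 1 else 0)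
      + (\<Sum>j\<in>{1..N}. if A j then 1 else 0) + \<kappa> * (1 + (\<Sum>j\<in>{1..N}. lam j))
      - \<kappa> * (if s \<noteq> c then Zp lam Q V s else 0)"
proof -
  define I where "I = {1..N::nat}"
  have sI: "s \<in> I" using sched_cases[OF N] s by (simp add: I_def)
  have sc: "s \<noteq> c \<Longrightarrow> c \<in> I \<Longrightarrow> Q c = 0"
    using sched_cases[OF N, of lam Q V c] s by (auto simp: I_def split: if_splits)
  have Vc: "c \<in> I \<Longrightarrow> V c = 1" using inv by (simp add: linv_def I_def)
  define D where "D = (\<lambda>j. if j = s \<and> Q j > 0 then 1 else 0 :: nat)"
  define Q' where "Q' = (\<lambda>j. if j \<in> I then (Q j - D j) + (if A j then 1 else 0) else 0)"
  define V' where "V' = (\<lambda>j. if j \<in> I then (if j = s then 1 else V j + 1) else (0::nat))"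
  have nx: "nxt N lam (Q, V, c) A = (Q', V', s)"
    unfolding nxt_def s Q'_def V'_def D_def I_def by (simp add: Let_def)
  have sumQ: "(\<Sum>j\<in>I. real (Q' j)) = (\<Sum>j\<in>I. real (Q j)) - (if Q s > 0 then 1 else 0) + (\<Sum>j\<in>I. if A j then 1 else 0)"
  proof -
    have "(\<Sum>j\<in>I. real (Q' j)) = (\<Sum>j\<in>I. real (Q j) - (if j = s then (if Q s > 0 then 1 else 0) else 0) + (if A j then 1 else 0))"
      by (intro sum.cong) (auto simp: Q'_def D_def of_nat_diff)
    also have "\<dots> = (\<Sum>j\<in>I. real (Q j)) - (\<Sum>j\<in>I. (if j = s then (if Q s > 0 then 1 else 0) else 0)) + (\<Sum>j\<in>I. if A j then 1 else 0)"
      by (simp add: sum.distrib sum_subtractf)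
    also have "(\<Sum>j\<in>I. (if j = s then (if Q s > 0 then 1 else 0) else 0)) = (if Q s > 0 then 1 else (0::real))"
      using sI by (simp add: I_def)
    finally show ?thesis .
  qed
  have Zstep: "Zp lam Q' V' j \<le> Zp lam Q V j + lam j" if j: "j \<in> I - {s}" for j
  proof -
    have "Q' j = Q j + (if A j then 1 else 0)" "V' j = V j + 1" using j by (auto simp: Q'_def V'_def D_def)
    then show ?thesis using lam0[of j] j unfolding Zp_def by (auto simp: algebra_simps I_def)
  qed
  have sumZ1: "(\<Sum>j\<in>I-{s}. Zp lam Q' V' j) \<le> (\<Sum>j\<in>I-{s}. Zp lam Q V j) + (\<Sum>j\<in>I. lam j)"
  proof -
    have "(\<Sum>j\<in>I-{s}. Zp lam Q' V' j) \<le> (\<Sum>j\<in>I-{s}. Zp lam Q V j + lam j)" by (intro sum_mono Zstep)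
    also have "\<dots> = (\<Sum>j\<in>I-{s}. Zp lam Q V j) + (\<Sum>j\<in>I-{s}. lam j)" by (simp add: sum.distrib)
    also have "(\<Sum>j\<in>I-{s}. lam j) \<le> (\<Sum>j\<in>I. lam j)"
      by (intro sum_mono2) (use lam0 in \<open>auto simp: I_def\<close>)
    finally show ?thesis by simp
  qed
  have finI: "finite I" by (simp add: I_def)
  have rem_s: "(\<Sum>j\<in>I. Zp lam Q V j) = Zp lam Q V s + (\<Sum>j\<in>I-{s}. Zp lam Q V j)"
    by (rule sum.remove[OF finI sI])
  have sumZ2: "(\<Sum>j\<in>I-{s}. Zp lam Q V j) \<le> (\<Sum>j\<in>I-{c}. Zp lam Q V j) + 1 - (if s \<noteq> c then Zp lam Q V s else 0)"
  proof (cases "s = c")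
    case True then show ?thesis by simp
  next
    case False
    show ?thesis
    proof (cases "c \<in> I")
      case True
      have rem_c: "(\<Sum>j\<in>I. Zp lam Q V j) = Zp lam Q V c + (\<Sum>j\<in>I-{c}. Zp lam Q V j)"
        by (rule sum.remove[OF finI True])
      have "Zp lam Q V c \<le> 1" using sc[OF False True] Vc[OF True] lam1[of c] lam0[of c] True
        by (simp add: Zp_def I_def)
      then show ?thesis using rem_c rem_s False by simp
    next
      case cI: False
      then have "I - {c} = I" by auto
      then show ?thesis using rem_s False by simp
    qed
  qed
  have "L0 N lam \<kappa> (nxt N lam (Q, V, c) A) = (\<Sum>j\<in>I. real (Q' j)) + \<kappa> * (\<Sum>j\<in>I-{s}. Zp lam Q' V' j)"
    unfolding nx L0_def I_def by simp
  also have "\<dots> \<le> (\<Sum>j\<in>I. real (Q' j)) + \<kappa> * ((\<Sum>j\<in>I-{c}. Zp lam Q V j) + 1 - (if s \<noteq> c then Zp lam Q V s else 0) + (\<Sum>j\<in>I. lam j))"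
    using sumZ1 sumZ2 k0 by (intro add_left_mono mult_left_mono) auto
  also have "\<dots> = L0 N lam \<kappa> (Q, V, c) - (if Q s > 0 then 1 else 0)
      + (\<Sum>j\<in>{1..N}. if A j then 1 else 0) + \<kappa> * (1 + (\<Sum>j\<in>{1..N}. lam j))
      - \<kappa> * (if s \<noteq> c then Zp lam Q V s else 0)"
    unfolding sumQ by (simp add: L0_def I_def algebra_simps)
  finally show ?thesis .
qed


lemma exp_lin:
  assumes "\<And>j. j \<in> {1..N} \<Longrightarrow> 0 \<le> lam j" "\<And>j. j \<in> {1..N} \<Longrightarrow> lam j \<le> 1"
  shows "measure_pmf.expectation (arrivals N lam) (\<lambda>A. C0 + (\<Sum>j\<in>{1..N}. if A j then 1 else 0)) = C0 + (\<Sum>j\<in>{1..N}. lam j)"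
proof -
  have int: "integrable (measure_pmf (arrivals N lam)) f" for f :: "_ \<Rightarrow> real"
    by (rule integrable_measure_pmf_finite[OF arrivals_fin])
  have "measure_pmf.expectation (arrivals N lam) (\<lambda>A. C0 + (\<Sum>j\<in>{1..N}. if A j then 1 else 0))
     = C0 + (\<Sum>j\<in>{1..N}. measure_pmf.expectation (arrivals N lam) (\<lambda>A. if A j then 1 else 0))"
    by (simp add: int integral_add integral_sum)
  also have "\<dots> = C0 + (\<Sum>j\<in>{1..N}. lam j)"
    using exp_indicator assms by (intro arg_cong2[where f="(+)"] sum.cong) auto
  finally show ?thesis .
qed

lemma drift:
  assumes N: "N \<ge> 1" and lam0: "\<And>j. j \<in> {1..N} \<Longrightarrow> 0 \<le> lam j"
    and sig: "(\<Sum>j\<in>{1..N}. lam j) < 1"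
    and inv: "linv N (Q, V, c)" and s: "s = leq_sched N lam (Q, V, c)"
    and k: "\<kappa> = (1 - (\<Sum>j\<in>{1..N}. lam j)) / 4" and M: "M = 4 / \<kappa>"
    and notF: "\<not> (Q s = 0 \<and> lam s * real (V s) \<le> M)"
  shows "measure_pmf.expectation (leq_kernel N lam (Q, V, c)) (L0 N lam \<kappa>)
           \<le> L0 N lam \<kappa> (Q, V, c) - (1 - (\<Sum>j\<in>{1..N}. lam j)) / 2"
proof -
  define \<sigma> where "\<sigma> = (\<Sum>j\<in>{1..N}. lam j)"
  have s0: "0 \<le> \<sigma>" unfolding \<sigma>_def by (rule sum_nonneg) (rule lam0)
  have s1: "\<sigma> < 1" using sig by (simp add: \<sigma>_def)
  have lam1: "lam j \<le> 1" if "j \<in> {1..N}" for j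
  proof -
    have "lam j \<le> \<sigma>" unfolding \<sigma>_def using that lam0 by (intro member_le_sum) auto
    then show ?thesis using s1 by simp
  qed
  have kpos: "0 < \<kappa>" using k s1 by (simp add: \<sigma>_def)
  have k0: "0 \<le> \<kappa>" using kpos by simp
  have kM: "\<kappa> * M = 4" using kpos M by simp
  have k1: "\<kappa> * (1 + \<sigma>) \<le> (1 - \<sigma>) / 2"
  proof -
    have "\<kappa> * (1 + \<sigma>) \<le> \<kappa> * 2" using k0 s1 by (intro mult_left_mono) auto
    also have "\<kappa> * 2 = (1 - \<sigma>) / 2" using k by (simp add: \<sigma>_def)
    finally show ?thesis .
  qed
  define W where "W = (if s \<noteq> c then Zp lam Q V s else 0)"
  define C0 where "C0 = L0 N lam \<kappa> (Q, V, c) - (if Q s > 0 then 1 else 0) + \<kappa> * (1 + \<sigma>) - \<kappa> * W"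
  have "measure_pmf.expectation (leq_kernel N lam (Q, V, c)) (L0 N lam \<kappa>)
      = measure_pmf.expectation (arrivals N lam) (\<lambda>A. L0 N lam \<kappa> (nxt N lam (Q, V, c) A))"
    by (simp add: kernel_map)
  also have "\<dots> \<le> measure_pmf.expectation (arrivals N lam) (\<lambda>A. C0 + (\<Sum>j\<in>{1..N}. if A j then 1 else 0))"
  proof (rule integral_mono)
    show "integrable (measure_pmf (arrivals N lam)) f" for f :: "_ \<Rightarrow> real"
      by (rule integrable_measure_pmf_finite[OF arrivals_fin])
    show "integrable (measure_pmf (arrivals N lam)) (\<lambda>A. C0 + (\<Sum>j\<in>{1..N}. if A j then 1 else (0::real)))"
      by (rule integrable_measure_pmf_finite[OF arrivals_fin])
    show "L0 N lam \<kappa> (nxt N lam (Q, V, c) A) \<le> C0 + (\<Sum>j\<in>{1..N}. if A j then 1 else 0)" for A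
      using step_bound[OF N inv lam0 lam1 k0 s, of A] unfolding C0_def W_def \<sigma>_def by simp
  qed
  also have "\<dots> = C0 + \<sigma>" unfolding \<sigma>_def by (rule exp_lin[OF lam0 lam1])
  also have "C0 + \<sigma> \<le> L0 N lam \<kappa> (Q, V, c) - (1 - \<sigma>) / 2"
  proof (cases "Q s > 0")
    case True
    have "0 \<le> W" by (simp add: W_def Zp_def)
    then have "\<kappa> * W \<ge> 0" using k0 by simp
    moreover have "C0 = L0 N lam \<kappa> (Q, V, c) - 1 + \<kappa> * (1 + \<sigma>) - \<kappa> * W" using True by (simp add: C0_def)
    ultimately show ?thesis using k1 by (simp add: field_simps)
  next
    case False
    then have Qs: "Q s = 0" by simp
    with notF have big: "lam s * real (V s) > M" by simp
    have sc: "s \<noteq> c"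
    proof
      assume sc: "s = c"
      have "s \<in> {1..N}" using sched_empty[OF N s Qs] by simp
      then have "V s = 1" using inv sc by (simp add: linv_def)
      then have "lam s * real (V s) \<le> 1" using lam1 sched_empty[OF N s Qs] by simp
      moreover have "1 \<le> M"
      proof (rule ccontr)
        assume "\<not> 1 \<le> M"
        then have "\<kappa> * M \<le> \<kappa> * 1" using k0 by (intro mult_left_mono) auto
        moreover have "\<kappa> \<le> 1 / 4" using k s0 by (simp add: \<sigma>_def)
        ultimately show False using kM by simp
      qed
      ultimately show False using big by simp
    qed
    have "W = lam s * real (V s)" unfolding W_def Zp_def using sc Qs big kpos M
      by (simp add: max_def) (smt (verit) divide_pos_pos)
    then have "\<kappa> * W \<ge> 4" using big kM kpos by (smt (verit) mult_strict_left_mono)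
    moreover have "C0 = L0 N lam \<kappa> (Q, V, c) + \<kappa> * (1 + \<sigma>) - \<kappa> * W" using Qs by (simp add: C0_def)
    ultimately show ?thesis using k1 s0 s1 by (simp add: field_simps)
  qed
  finally show ?thesis by (simp add: \<sigma>_def)
qed


definition Fset :: "nat \<Rightarrow> (nat \<Rightarrow> real) \<Rightarrow> real \<Rightarrow> qstate set" where
  "Fset N lam M = {x. reachable (leq_init N lam) (leq_kernel N lam) x \<and>
     (case x of (Q, V, c) \<Rightarrow> Q (leq_sched N lam x) = 0 \<and>
        lam (leq_sched N lam x) * real (V (leq_sched N lam x)) \<le> M)}"

lemma Fset_finite:
  assumes N: "N \<ge> 1" and lmin: "\<And>j. j \<in> {1..N} \<Longrightarrow> lmin \<le> lam j" and lpos: "0 < lmin" and M0: "0 \<le> M"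
  shows "finite (Fset N lam M)"
proof -
  define B where "B = nat \<lceil>M / lmin\<rceil>"
  define QS where "QS = PiE_dflt {1..N} (0::nat) (\<lambda>_. {0..B+1})"
  define VS where "VS = PiE_dflt {1..N} (0::nat) (\<lambda>_. {0..B})"
  have "Fset N lam M \<subseteq> QS \<times> VS \<times> {0..N}"
  proof
    fix x assume x: "x \<in> Fset N lam M"
    obtain Q V c where xe: "x = (Q, V, c)" by (cases x)
    define s where "s = leq_sched N lam (Q, V, c)"
    have r: "reachable (leq_init N lam) (leq_kernel N lam) (Q, V, c)" and Qs: "Q s = 0"
      and Ms: "lam s * real (V s) \<le> M"
      using x unfolding Fset_def xe s_def by auto
    have inv: "linv N (Q, V, c)" by (rule reach_inv[OF N r])
    have maxs: "\<forall>j\<in>{1..N}. lam j * real (V j) \<le> lam s * real (V s)"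
      using sched_empty[OF N s_def Qs] by simp
    have Vb: "V j \<le> B" if j: "j \<in> {1..N}" for j
    proof -
      have lj: "0 < lam j" using lmin[OF j] lpos by simp
      have "lam j * real (V j) \<le> M" using maxs j Ms by force
      then have "real (V j) \<le> M / lam j" using lj by (simp add: field_simps)
      also have "\<dots> \<le> M / lmin" using lmin[OF j] lpos M0 by (intro divide_left_mono) auto
      also have "\<dots> \<le> real B" unfolding B_def by (rule real_nat_ceiling_ge)
      finally show ?thesis by simp
    qed
    have Qb: "Q j \<le> B + 1" if j: "j \<in> {1..N}" for j
    proof (cases "j = c")
      case True
      have "Q c = 0"
      proof (rule ccontr)
        assume "Q c \<noteq> 0"
        then have "s = c" using sched_cases[OF N, of lam Q V c] True j by (simp add: s_def)
        then show False using Qs \<open>Q c \<noteq> 0\<close> by simp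
      qed
      then show ?thesis using True by simp
    next
      case False
      then have "Q j \<le> V j + 1" using inv j by (simp add: linv_def)
      then show ?thesis using Vb[OF j] by simp
    qed
    have out: "Q j = 0 \<and> V j = 0" if "j \<notin> {1..N}" for j using inv that by (simp add: linv_def)
    have "c \<le> N" using inv by (simp add: linv_def)
    then show "x \<in> QS \<times> VS \<times> {0..N}"
      unfolding xe QS_def VS_def PiE_dflt_def using Qb Vb out by auto
  qed
  moreover have "finite (QS \<times> VS \<times> {0..N})" unfolding QS_def VS_def by auto
  ultimately show ?thesis by (rule finite_subset)
qed

theorem main:
  fixes N :: nat and lam :: "nat \<Rightarrow> real"
  assumes N: "N \<ge> 1"
    and lam0': "\<forall>i\<in>{1..N}. lam i \<ge> 0"
    and sig: "(\<Sum>i=1..N. lam i) < 1"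
    and minpos: "Min (lam ` {1..N}) > 0"
  shows "leq_stable N lam"
proof -
  interpret K: fk "leq_kernel N lam" by unfold_locales (rule kernel_fin)
  define \<sigma> where "\<sigma> = (\<Sum>i=1..N. lam i)"
  define \<kappa> where "\<kappa> = (1 - \<sigma>) / 4"
  define M where "M = 4 / \<kappa>"
  define lmin where "lmin = Min (lam ` {1..N})"
  have lam0: "\<And>j. j \<in> {1..N} \<Longrightarrow> 0 \<le> lam j" using lam0' by auto
  have lmin: "\<And>j. j \<in> {1..N} \<Longrightarrow> lmin \<le> lam j" unfolding lmin_def by (intro Min_le) auto
  have lpos: "0 < lmin" unfolding lmin_def by (rule minpos)
  have s1: "\<sigma> < 1" using sig by (simp add: \<sigma>_def)
  have kpos: "0 < \<kappa>" using s1 by (simp add: \<kappa>_def)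
  have M0: "0 \<le> M" using kpos by (simp add: M_def)
  define R where "R = {x. reachable (leq_init N lam) (leq_kernel N lam) x}"
  define L where "L = (\<lambda>x. (2 / (1 - \<sigma>)) * L0 N lam \<kappa> x)"
  have c2: "0 < 2 / (1 - \<sigma>)" using s1 by simp
  show ?thesis
    unfolding leq_stable_def positive_recurrent_chain_def
  proof (intro allI impI)
    fix x assume x: "reachable (leq_init N lam) (leq_kernel N lam) x"
    show "(\<lambda>n. first_passage (leq_kernel N lam) {y. positive_recurrent_state (leq_kernel N lam) y} n x) sums 1"
    proof (rule K.generic[where R=R and F="Fset N lam M" and L=L])
      show "y \<in> R" if "x \<in> R" "y \<in> set_pmf (leq_kernel N lam x)" for x y
        using that reachable.step by (auto simp: R_def)
      show "finite (Fset N lam M)" by (rule Fset_finite[OF N lmin lpos M0])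
      show "Fset N lam M \<subseteq> R" by (auto simp: Fset_def R_def)
      show "0 \<le> L x" for x unfolding L_def using c2 kpos L0_nonneg[of \<kappa>] by simp
      show "x \<in> R" using x by (simp add: R_def)
      show "1 + K.E L y \<le> L y" if y: "y \<in> R" "y \<notin> Fset N lam M" for y
      proof -
        obtain Q V c where ye: "y = (Q, V, c)" by (cases y)
        have r: "reachable (leq_init N lam) (leq_kernel N lam) (Q, V, c)" using y ye by (simp add: R_def)
        have inv: "linv N (Q, V, c)" by (rule reach_inv[OF N r])
        define s where "s = leq_sched N lam (Q, V, c)"
        have notF: "\<not> (Q s = 0 \<and> lam s * real (V s) \<le> M)"
          using y r unfolding ye Fset_def s_def by auto
        have dr: "measure_pmf.expectation (leq_kernel N lam (Q, V, c)) (L0 N lam \<kappa>)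
           \<le> L0 N lam \<kappa> (Q, V, c) - (1 - \<sigma>) / 2"
        proof -
          have keq: "\<kappa> = (1 - (\<Sum>j\<in>{1..N}. lam j)) / 4" by (simp add: \<kappa>_def \<sigma>_def)
          show ?thesis using drift[OF N lam0 sig inv s_def keq M_def notF] by (simp add: \<sigma>_def)
        qed
        have "K.E L y = (2 / (1 - \<sigma>)) * K.E (L0 N lam \<kappa>) y"
          unfolding L_def by (rule K.E_cmult)
        also have "\<dots> = (2 / (1 - \<sigma>)) * measure_pmf.expectation (leq_kernel N lam (Q, V, c)) (L0 N lam \<kappa>)"
          by (simp add: K.E_eq ye)
        also have "\<dots> \<le> (2 / (1 - \<sigma>)) * (L0 N lam \<kappa> (Q, V, c) - (1 - \<sigma>) / 2)"
          using dr c2 by (intro mult_left_mono) auto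
        also have "\<dots> = L y - 1" using s1 by (simp add: L_def ye field_simps)
        finally show ?thesis by simp
      qed
    qed
  qed
qed


theorem proposition2:
  fixes N :: nat and lam :: "nat \<Rightarrow> real"
  assumes "N \<ge> 1"
    and "\<forall>i\<in>{1..N}. lam i \<ge> 0"
    and "(\<Sum>i=1..N. lam i) < 1"
    and "Min (lam ` {1..N}) > 0"
  shows "leq_stable N lam"
  using main[OF assms] .

end
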